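(* Let $k>1$, $n=k-1$, $N=2n+1$, and let $m_1,\dots,m_k$ be positive integers with $M=\mathrm{diag}(m_1,\dots,m_k)$. Let $P\in\mathbb{R}^{N\times k}$ be the deterministic transition matrix in which, for each $\ell\in[k-1]$, the row of the intervention $do(X^0_\ell=1)$ is the $\ell$-th standard basis vector $e_\ell$, and the rows of all the other $N-(k-1)$ interventions equal $e_k$. Then $$\lambda:=\min_{f}\left\|PM^{1/2}(P^\top f)^{\circ-1/2}\right\|_\infty^2=\sum_{\ell\in[k]}m_\ell,$$ the minimum being over frequency vectors $f$.
   Context: A frequency vector is $f\in\mathbb{R}^N$ with $f\ge0$ and $\sum_a f_a=1$. For a vector $x$ with nonnegative entries, $x^{\circ-1/2}$ is the vector with entries $x_i^{-1/2}$ (interpreted as $+\infty$ when $x_i=0$). Rows of $P$ are indexed by the $N$ atomic interventions at state $0$, namely $do()$ and $do(X^0_j=0),do(X^0_j=1)$ for $j\in[n]$; columns by the intermediate states $[k]$. *)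

theory Defs
  imports "HOL-Analysis.Analysis" "HOL-Library.Extended_Real"
begin

text \<open>Atomic interventions at state 0: do(), and do(X_j = b) for j in [n], b in {0,1}
  (False = value 0, True = value 1).\<close>
datatype intv = DoEmpty | DoX nat bool

definition interventions :: "nat \<Rightarrow> intv set" where
  "interventions n = {DoEmpty} \<union> {DoX j b | j b. j \<in> {1..n}}"

definition freq_vec :: "'r set \<Rightarrow> ('r \<Rightarrow> real) \<Rightarrow> bool" where
  "freq_vec R f \<longleftrightarrow> (\<forall>a\<in>R. f a \<ge> 0) \<and> (\<Sum>a\<in>R. f a) = 1"

definition inv_sqrt :: "real \<Rightarrow> ereal" where
  "inv_sqrt x = (if x = 0 then \<infinity> else ereal (1 / sqrt x))"

definition col_mass :: "'r set \<Rightarrow> ('r \<Rightarrow> nat \<Rightarrow> real) \<Rightarrow> ('r \<Rightarrow> real) \<Rightarrow> nat \<Rightarrow> real" where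
  "col_mass R P f j = (\<Sum>a\<in>R. P a j * f a)"

definition obj_vec :: "nat \<Rightarrow> 'r set \<Rightarrow> ('r \<Rightarrow> nat \<Rightarrow> real) \<Rightarrow> (nat \<Rightarrow> nat) \<Rightarrow> ('r \<Rightarrow> real) \<Rightarrow> 'r \<Rightarrow> ereal" where
  "obj_vec k R P m f a =
     (\<Sum>j\<in>{1..k}. ereal (P a j) * (ereal (sqrt (real (m j))) * inv_sqrt (col_mass R P f j)))"

definition objective :: "nat \<Rightarrow> 'r set \<Rightarrow> ('r \<Rightarrow> nat \<Rightarrow> real) \<Rightarrow> (nat \<Rightarrow> nat) \<Rightarrow> ('r \<Rightarrow> real) \<Rightarrow> ereal" where
  "objective k R P m f = (Max ((\<lambda>a. \<bar>obj_vec k R P m f a\<bar>) ` R)) ^ 2"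

definition P_det :: "nat \<Rightarrow> intv \<Rightarrow> nat \<Rightarrow> real" where
  "P_det k a j = (case a of
      DoX l True \<Rightarrow> (if 1 \<le> l \<and> l \<le> k - 1 then (if j = l then 1 else 0) else (if j = k then 1 else 0))
    | _ \<Rightarrow> (if j = k then 1 else 0))"

end

theory Submission imports Defs begin

definition col :: "nat \<Rightarrow> intv \<Rightarrow> nat" where
  "col k a = (case a of DoX l True \<Rightarrow> (if 1 \<le> l \<and> l \<le> k - 1 then l else k) | _ \<Rightarrow> k)"

lemma P_col: "P_det k a j = (if j = col k a then 1 else 0)"
  unfolding P_det_def col_def by (auto split: intv.splits bool.splits)

lemma col_range: "k > 1 \<Longrightarrow> col k a \<in> {1..k}"
  unfolding col_def by (auto split: intv.splits bool.splits)

lemma fin_R: "finite (interventions n)"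
proof -
  have "interventions n = {DoEmpty} \<union> (\<lambda>(j,b). DoX j b) ` ({1..n} \<times> UNIV)"
    unfolding interventions_def by auto
  then show ?thesis by simp
qed

lemma col_image: "k > 1 \<Longrightarrow> col k ` interventions (k-1) = {1..k}"
proof
  assume "k > 1"
  then show "col k ` interventions (k-1) \<subseteq> {1..k}" using col_range by auto
  show "{1..k} \<subseteq> col k ` interventions (k-1)"
  proof
    fix j assume j: "j \<in> {1..k}"
    show "j \<in> col k ` interventions (k-1)"
    proof (cases "j = k")
      case True
      then have "col k DoEmpty = j" by (simp add: col_def)
      moreover have "DoEmpty \<in> interventions (k-1)" by (simp add: interventions_def)
      ultimately show ?thesis by force
    next
      case False
      then have "col k (DoX j True) = j" using j by (auto simp add: col_def)
      moreover have "DoX j True \<in> interventions (k-1)" using j False by (auto simp add: interventions_def)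
      ultimately show ?thesis by force
    qed
  qed
qed

lemma sum_cols: 
  assumes "k > 1"
  shows "(\<Sum>j\<in>{1..k}. col_mass R (P_det k) f j) = (\<Sum>a\<in>R. f a)"
proof -
  have "(\<Sum>j\<in>{1..k}. col_mass R (P_det k) f j) = (\<Sum>a\<in>R. \<Sum>j\<in>{1..k}. (if j = col k a then f a else 0))"
    unfolding col_mass_def P_col by (subst sum.swap) (rule sum.cong, auto intro: sum.cong)
  also have "\<dots> = (\<Sum>a\<in>R. f a)"
    using col_range[OF assms] by (simp add: sum.delta')
  finally show ?thesis .
qed

lemma obj_eq:
  assumes "k > 1"
  shows "obj_vec k R (P_det k) m f a = ereal (sqrt (real (m (col k a)))) * inv_sqrt (col_mass R (P_det k) f (col k a))"
proof -
  let ?X = "\<lambda>j. ereal (sqrt (real (m j))) * inv_sqrt (col_mass R (P_det k) f j)"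
  have "obj_vec k R (P_det k) m f a = (\<Sum>j\<in>{1..k}. (if j = col k a then ?X j else 0))"
    unfolding obj_vec_def P_col by (rule sum.cong) auto
  also have "\<dots> = ?X (col k a)" using col_range[OF assms] by (simp add: sum.delta')
  finally show ?thesis .
qed


lemma ereal_sq_ge: "ereal r \<le> (x::ereal) \<Longrightarrow> 0 \<le> r \<Longrightarrow> ereal (r^2) \<le> x^2"
  by (cases x) (auto simp: power_mono)

lemma objective_eq:
  assumes "k > 1"
  shows "objective k (interventions (k-1)) (P_det k) m f =
    (Max ((\<lambda>j. \<bar>ereal (sqrt (real (m j))) * inv_sqrt (col_mass (interventions (k-1)) (P_det k) f j)\<bar>) ` {1..k}))^2"
proof -
  have "(\<lambda>a. \<bar>obj_vec k (interventions (k-1)) (P_det k) m f a\<bar>) ` interventions (k-1)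
     = (\<lambda>j. \<bar>ereal (sqrt (real (m j))) * inv_sqrt (col_mass (interventions (k-1)) (P_det k) f j)\<bar>) ` (col k ` interventions (k-1))"
    unfolding obj_eq[OF assms] by (simp add: image_comp o_def)
  then show ?thesis unfolding objective_def col_image[OF assms] by simp
qed

theorem proposition4:
  fixes k :: nat and m :: "nat \<Rightarrow> nat"
  assumes "k > 1"
    and "\<forall>l\<in>{1..k}. m l > 0"
  shows "(\<exists>f. freq_vec (interventions (k - 1)) f \<and>
             objective k (interventions (k - 1)) (P_det k) m f = ereal (\<Sum>l\<in>{1..k}. real (m l)))
       \<and> (\<forall>f. freq_vec (interventions (k - 1)) f \<longrightarrow>
             ereal (\<Sum>l\<in>{1..k}. real (m l)) \<le> objective k (interventions (k - 1)) (P_det k) m f)"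
proof -
  define R where "R = interventions (k-1)"
  define S where "S = (\<Sum>l\<in>{1..k}. real (m l))"
  have finR: "finite R" unfolding R_def by (rule fin_R)
  have mpos: "\<And>j. j \<in> {1..k} \<Longrightarrow> real (m j) > 0" using assms(2) by auto
  have Spos: "S > 0" unfolding S_def using assms(1) mpos by (intro sum_pos) auto
  have part1: "\<exists>f. freq_vec R f \<and> objective k R (P_det k) m f = ereal S"
  proof -
    define f where "f a = (case a of DoEmpty \<Rightarrow> real (m k) / S
        | DoX l b \<Rightarrow> (if b \<and> 1 \<le> l \<and> l \<le> k - 1 then real (m l) / S else 0))" for a
    define w where "w j = (if j = k then DoEmpty else DoX j True)" for j
    have c: "col_mass R (P_det k) f j = real (m j) / S" if j: "j \<in> {1..k}" for j
    proof -
      have wR: "w j \<in> R" using j unfolding w_def R_def interventions_def by auto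
      have "col_mass R (P_det k) f j = (\<Sum>a\<in>R. if a = w j then f a else 0)"
        unfolding col_mass_def P_col
      proof (rule sum.cong)
        fix a assume "a \<in> R"
        then show "(if j = col k a then 1 else 0) * f a = (if a = w j then f a else 0)"
          using j unfolding R_def interventions_def w_def col_def f_def
          by (auto split: intv.splits bool.splits)
      qed simp
      also have "\<dots> = f (w j)" using finR wR by (simp add: sum.delta')
      also have "\<dots> = real (m j) / S" using j unfolding w_def f_def by auto
      finally show ?thesis .
    qed
    have fr: "freq_vec R f"
      unfolding freq_vec_def
    proof
      show "\<forall>a\<in>R. 0 \<le> f a" using Spos unfolding f_def by (auto split: intv.splits)
      have "(\<Sum>a\<in>R. f a) = (\<Sum>j\<in>{1..k}. col_mass R (P_det k) f j)"
        using sum_cols[OF assms(1)] by simp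
      also have "\<dots> = (\<Sum>j\<in>{1..k}. real (m j) / S)" using c by simp
      also have "\<dots> = 1" using Spos unfolding S_def by (simp add: sum_divide_distrib[symmetric])
      finally show "(\<Sum>a\<in>R. f a) = 1" .
    qed
    have g: "\<bar>ereal (sqrt (real (m j))) * inv_sqrt (col_mass R (P_det k) f j)\<bar> = ereal (sqrt S)"
      if j: "j \<in> {1..k}" for j
    proof -
      have mj: "real (m j) > 0" using mpos j by auto
      have "sqrt (real (m j)) * (1 / sqrt (real (m j) / S)) = sqrt S"
        using mj Spos by (simp add: real_sqrt_divide field_simps)
      then show ?thesis using c[OF j] mj Spos by (simp add: inv_sqrt_def)
    qed
    have "(\<lambda>j. \<bar>ereal (sqrt (real (m j))) * inv_sqrt (col_mass R (P_det k) f j)\<bar>) ` {1..k} = {ereal (sqrt S)}"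
    proof -
      have "(\<lambda>j. \<bar>ereal (sqrt (real (m j))) * inv_sqrt (col_mass R (P_det k) f j)\<bar>) ` {1..k} = (\<lambda>j. ereal (sqrt S)) ` {1..k}"
        using g by (rule image_cong[OF refl])
      also have "\<dots> = {ereal (sqrt S)}" using assms(1) by (intro image_constant) auto
      finally show ?thesis .
    qed
    then have "objective k R (P_det k) m f = ereal S"
      unfolding R_def objective_eq[OF assms(1)] using Spos by (simp add: R_def)
    then show ?thesis using fr by blast
  qed
  have part2: "ereal S \<le> objective k R (P_det k) m f" if fr: "freq_vec R f" for f
  proof -
    let ?c = "col_mass R (P_det k) f"
    have cnn: "?c j \<ge> 0" for j using fr unfolding freq_vec_def col_mass_def P_col
      by (intro sum_nonneg) auto
    have sc: "(\<Sum>j\<in>{1..k}. ?c j) = 1" using sum_cols[OF assms(1)] fr unfolding freq_vec_def by simp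
    have "\<exists>j\<in>{1..k}. ?c j * S \<le> real (m j)"
    proof (rule ccontr)
      assume "\<not> ?thesis"
      then have "\<forall>j\<in>{1..k}. real (m j) < ?c j * S" by auto
      then have "(\<Sum>j\<in>{1..k}. real (m j)) < (\<Sum>j\<in>{1..k}. ?c j * S)"
        using assms(1) by (intro sum_strict_mono) auto
      also have "\<dots> = S" using sc by (simp add: sum_distrib_right[symmetric])
      finally show False unfolding S_def by simp
    qed
    then obtain j where j: "j \<in> {1..k}" and cj: "?c j * S \<le> real (m j)" by blast
    have mj: "real (m j) > 0" using mpos j by auto
    have ge: "ereal (sqrt S) \<le> \<bar>ereal (sqrt (real (m j))) * inv_sqrt (?c j)\<bar>"
    proof (cases "?c j = 0")
      case True
      then show ?thesis using mj by (simp add: inv_sqrt_def)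
    next
      case False
      then have cp: "?c j > 0" using cnn[of j] by linarith
      have "S \<le> real (m j) / ?c j" using cj cp by (simp add: field_simps)
      then have "sqrt S \<le> sqrt (real (m j) / ?c j)" by simp
      also have "\<dots> = sqrt (real (m j)) * (1 / sqrt (?c j))" by (simp add: real_sqrt_divide)
      finally show ?thesis using False cp by (simp add: inv_sqrt_def)
    qed
    also have "\<dots> \<le> Max ((\<lambda>j. \<bar>ereal (sqrt (real (m j))) * inv_sqrt (?c j)\<bar>) ` {1..k})"
      using j by (intro Max_ge) auto
    finally have "ereal ((sqrt S)^2) \<le> (Max ((\<lambda>j. \<bar>ereal (sqrt (real (m j))) * inv_sqrt (?c j)\<bar>) ` {1..k}))^2"
      by (rule ereal_sq_ge) (use Spos in simp)
    then show ?thesis unfolding R_def objective_eq[OF assms(1)] using Spos by (simp add: R_def)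
  qed
  show ?thesis using part1 part2 unfolding R_def S_def by blast
qed

end
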